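(* For $1\le k\le n-1$, the random variable $U_k-1$ has a hypergeometric distribution with parameters $n-1$ (population size), $k-1$ (number of marked elements) and $n-k-1$ (number of draws), i.e. $\mathbf P(U_k-1=j)=\binom{k-1}{j}\binom{n-k}{n-k-1-j}\big/\binom{n-1}{n-k-1}$.
   Context: Urn process: let $n\ge2$. An urn initially contains $n$ black balls. It is emptied in $n$ steps: in each of the first $n-1$ steps a uniformly random pair of balls is removed from the urn and replaced by one red ball; in step $n$ the last remaining ball is removed. $U_k$ is the number of red balls in the urn after $k$ steps, $0\le k\le n$. *)

theory Defs
  imports "HOL-Probability.Probability"
begin

text \<open>Urn state: (number of black balls, number of red balls).
  The balls are labelled 0 ..< b + r; labels below b are black, the others red.\<close>

definition urn_pairs :: "nat \<Rightarrow> nat set set" where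
  "urn_pairs m = {S. S \<subseteq> {0..<m} \<and> card S = 2}"

definition urn_step :: "nat \<times> nat \<Rightarrow> (nat \<times> nat) pmf" where
  "urn_step s = (case s of (b, r) \<Rightarrow>
     if b + r \<ge> 2 then
       map_pmf (\<lambda>S. (b - card (S \<inter> {..<b}), r - card (S - {..<b}) + 1))
               (pmf_of_set (urn_pairs (b + r)))
     else return_pmf (0, 0))"

fun urn_state :: "nat \<Rightarrow> nat \<Rightarrow> (nat \<times> nat) pmf" where
  "urn_state n 0 = return_pmf (n, 0)"
| "urn_state n (Suc k) = bind_pmf (urn_state n k) urn_step"

definition urn_U :: "nat \<Rightarrow> nat \<Rightarrow> nat pmf" where
  "urn_U n k = map_pmf snd (urn_state n k)"

end

theory Submission
  imports Defs
begin

lemma card_split_subsets: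
  assumes fin: "finite A" "finite B" and dis: "A \<inter> B = {}" and tq: "t \<le> q"
  shows "card {S. S \<subseteq> A \<union> B \<and> card S = q \<and> card (S \<inter> A) = t}
         = (card A choose t) * (card B choose (q - t))"
proof -
  let ?X = "{X. X \<subseteq> A \<and> card X = t}" and ?Y = "{Y. Y \<subseteq> B \<and> card Y = q - t}"
  have eq: "{S. S \<subseteq> A \<union> B \<and> card S = q \<and> card (S \<inter> A) = t} = (\<lambda>(X,Y). X \<union> Y) ` (?X \<times> ?Y)"
  proof (rule set_eqI, rule iffI)
    fix S assume S: "S \<in> {S. S \<subseteq> A \<union> B \<and> card S = q \<and> card (S \<inter> A) = t}"
    have fS: "finite S" using S fin finite_subset by auto
    have dec: "S = (S \<inter> A) \<union> (S \<inter> B)" using S by auto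
    moreover have "card (S \<inter> B) = q - t"
    proof -
      have "card S = card ((S \<inter> A) \<union> (S \<inter> B))" using dec by simp
      also have "\<dots> = card (S \<inter> A) + card (S \<inter> B)"
        using fS dis by (intro card_Un_disjoint) auto
      finally have "card S = card (S \<inter> A) + card (S \<inter> B)" .
      then show ?thesis using S by auto
    qed
    ultimately show "S \<in> (\<lambda>(X,Y). X \<union> Y) ` (?X \<times> ?Y)" using S
      by (intro image_eqI[where x="(S \<inter> A, S \<inter> B)"]) auto
  next
    fix S assume "S \<in> (\<lambda>(X,Y). X \<union> Y) ` (?X \<times> ?Y)"
    then obtain X Y where S: "S = X \<union> Y" and X: "X \<subseteq> A" "card X = t" and Y: "Y \<subseteq> B" "card Y = q - t"
      by auto
    have fX: "finite X" "finite Y" using X Y fin finite_subset by auto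
    have "X \<inter> Y = {}" using X Y dis by auto
    hence "card S = q" using S fX X Y tq by (simp add: card_Un_disjoint)
    moreover have "S \<inter> A = X" using S X Y dis by auto
    ultimately show "S \<in> {S. S \<subseteq> A \<union> B \<and> card S = q \<and> card (S \<inter> A) = t}"
      using S X Y by auto
  qed
  have inj: "inj_on (\<lambda>(X,Y). X \<union> Y) (?X \<times> ?Y)"
  proof (rule inj_onI, clarify)
    fix X Y X' Y' assume "X \<subseteq> A" "Y \<subseteq> B" "X' \<subseteq> A" "Y' \<subseteq> B" and e: "X \<union> Y = X' \<union> Y'"
    then have "X = (X \<union> Y) \<inter> A" "X' = (X' \<union> Y') \<inter> A" "Y = (X \<union> Y) \<inter> B" "Y' = (X' \<union> Y') \<inter> B"
      using dis by auto
    then show "X = X' \<and> Y = Y'" using e by metis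
  qed
  show ?thesis unfolding eq using fin
    by (simp add: card_image[OF inj] card_cartesian_product n_subsets)
qed

lemma card_diff_lt: "finite S \<Longrightarrow> card S = card (S \<inter> A) + card (S - A)"
  by (metis Diff_Diff_Int Diff_subset card_Diff_subset card_mono finite_Diff le_add_diff_inverse2 inf_commute Int_lower2 card_Diff_subset_Int finite_Int)

lemma step_red:
  assumes bm: "b + r = m" and m2: "m \<ge> 2"
  shows "pmf (map_pmf snd (urn_step (b,r))) s =
    (\<Sum>t\<le>2. if r - (2 - t) + 1 = s then real ((b choose t) * (r choose (2 - t))) / real (m choose 2) else 0)"
proof -
  define P where "P = urn_pairs m"
  define h where "h = (\<lambda>S::nat set. card (S \<inter> {..<b}))"
  define f where "f = (\<lambda>S::nat set. r - card (S - {..<b}) + 1)"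
  have cardP: "card P = m choose 2" unfolding P_def urn_pairs_def using n_subsets[of "{0..<m}" 2] by simp
  have Cpos: "m choose 2 > 0" using m2 by (simp add: zero_less_binomial)
  have finP: "finite P" unfolding P_def urn_pairs_def by (rule finite_subset[of _ "Pow {0..<m}"]) auto
  have Pne: "P \<noteq> {}" using cardP Cpos by auto
  have st: "map_pmf snd (urn_step (b,r)) = map_pmf f (pmf_of_set P)"
    using bm m2 by (simp add: urn_step_def P_def f_def map_pmf_comp)
  have hf: "f S = r - (2 - h S) + 1" if "S \<in> P" for S
  proof -
    have "finite S" "card S = 2" using that unfolding P_def urn_pairs_def by (auto intro: finite_subset)
    then show ?thesis unfolding f_def h_def using card_diff_lt[of S "{..<b}"] by simp
  qed
  have hle: "h S \<le> 2" if "S \<in> P" for S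
  proof -
    have "finite S" "card S = 2" using that unfolding P_def urn_pairs_def by (auto intro: finite_subset)
    then show ?thesis unfolding h_def by (metis Int_lower1 card_mono)
  qed
  have decomp: "P \<inter> f -` {s} = (\<Union>t\<in>{..2}. {S \<in> P. h S = t \<and> f S = s})"
    using hle by auto
  have cardU: "card (P \<inter> f -` {s}) = (\<Sum>t\<le>2. card {S \<in> P. h S = t \<and> f S = s})"
    unfolding decomp using finP by (intro card_UN_disjoint) auto
  have piece: "card {S \<in> P. h S = t \<and> f S = s} =
      (if r - (2 - t) + 1 = s then (b choose t) * (r choose (2 - t)) else 0)" if t2: "t \<le> 2" for t
  proof -
    have "{S \<in> P. h S = t \<and> f S = s} = (if r - (2 - t) + 1 = s then {S \<in> P. h S = t} else {})"
      using hf by auto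
    moreover have "{S \<in> P. h S = t} = {S. S \<subseteq> {..<b} \<union> {b..<m} \<and> card S = 2 \<and> card (S \<inter> {..<b}) = t}"
    proof -
      have "{0..<m} = {..<b} \<union> {b..<m}" using bm by auto
      then show ?thesis unfolding P_def urn_pairs_def h_def by auto
    qed
    moreover have "card {S. S \<subseteq> {..<b} \<union> {b..<m} \<and> card S = 2 \<and> card (S \<inter> {..<b}) = t}
        = (b choose t) * (r choose (2 - t))"
    proof -
      have dj: "{..<b} \<inter> {b..<m} = {}" by auto
      have "m - b = r" using bm by simp
      then show ?thesis using card_split_subsets[OF _ _ dj t2] by simp
    qed
    ultimately show ?thesis by simp
  qed
  have "pmf (map_pmf snd (urn_step (b,r))) s = card (P \<inter> f -` {s}) / card P"
    unfolding st pmf_map using finP Pne by (simp add: measure_pmf_of_set)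
  also have "\<dots> = (\<Sum>t\<le>2. real (if r - (2 - t) + 1 = s then (b choose t) * (r choose (2 - t)) else 0)) / real (m choose 2)"
    unfolding cardU cardP of_nat_sum by (simp add: piece)
  also have "\<dots> = (\<Sum>t\<le>2. if r - (2 - t) + 1 = s then real ((b choose t) * (r choose (2 - t))) / real (m choose 2) else 0)"
    unfolding sum_divide_distrib by (intro sum.cong) auto
  finally show ?thesis .
qed


definition FF :: "nat \<Rightarrow> nat \<Rightarrow> nat \<Rightarrow> real" where
  "FF n k s = (if s = 0 then 0 else real ((k - 1) choose (s - 1)) * real ((n - k) choose s) / real ((n - 1) choose k))"

lemma choose2_real: "real (x choose 2) = real x * (real x - 1) / 2"
  by (induct x) (auto simp: field_simps numeral_2_eq_2)

lemma key_real0: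
  fixes k s m B E C0 u v w x :: real
  assumes nz: "k \<noteq> 0" "s \<noteq> 0" "m \<noteq> 0" "v \<noteq> 0" "u \<noteq> 0" "x \<noteq> 0" "w \<noteq> 0" "C0 \<noteq> 0"
    and br: "(k - s) * (x - s) + 2 * (x - s) * s + (s - 1) * s = k * x"
  shows "((k - s) * ((x - s) * B / k) / s) * ((m - s) * E / u) / C0 * (u * s / 2 / (m * v / 2))
    + ((x - s) * B / k) * E / C0 * ((m - s) * s / (m * v / 2))
    + ((s - 1) * B / k) * (s * E / w) / C0 * (w * (m - s) / 2 / (m * v / 2))
    = B * ((m - s) * E / m) / (v * C0 / x)"
proof -
  define D where "D = k * C0 * m * v"
  have a: "((k - s) * ((x - s) * B / k) / s) * ((m - s) * E / u) / C0 * (u * s / 2 / (m * v / 2))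
     = B * E * (m - s) * ((k - s) * (x - s)) / D"
    using nz unfolding D_def by (simp add: field_simps)
  have b: "((x - s) * B / k) * E / C0 * ((m - s) * s / (m * v / 2)) = B * E * (m - s) * (2 * (x - s) * s) / D"
    using nz unfolding D_def by (simp add: field_simps)
  have c: "((s - 1) * B / k) * (s * E / w) / C0 * (w * (m - s) / 2 / (m * v / 2))
     = B * E * (m - s) * ((s - 1) * s) / D"
    using nz unfolding D_def by (simp add: field_simps)
  have d: "B * ((m - s) * E / m) / (v * C0 / x) = B * E * (m - s) * (k * x) / D"
    using nz unfolding D_def by (simp add: field_simps)
  have e: "B * E * (m - s) * ((k - s) * (x - s)) + B * E * (m - s) * (2 * (x - s) * s) + B * E * (m - s) * ((s - 1) * s) = B * E * (m - s) * (k * x)"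
    by (simp only: distrib_left[symmetric] br)
  show ?thesis unfolding a b c d add_divide_distrib[symmetric] e ..
qed

lemma key_real:
  fixes k s m B E C0 :: real
  assumes nz: "k \<noteq> 0" "s \<noteq> 0" "m \<noteq> 0" "m - 1 \<noteq> 0" "s + 1 \<noteq> 0" "k + 1 \<noteq> 0" "m - s + 1 \<noteq> 0" "C0 \<noteq> 0"
  shows "((k - s) * ((k + 1 - s) * B / k) / s) * ((m - s) * E / (s + 1)) / C0 * ((s + 1) * s / 2 / (m * (m - 1) / 2))
    + ((k + 1 - s) * B / k) * E / C0 * ((m - s) * s / (m * (m - 1) / 2))
    + ((s - 1) * B / k) * (s * E / (m - s + 1)) / C0 * ((m - s + 1) * (m - s) / 2 / (m * (m - 1) / 2))
    = B * ((m - s) * E / m) / ((m - 1) * C0 / (k + 1))"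
proof -
  have br: "(k - s) * (k + 1 - s) + 2 * (k + 1 - s) * s + (s - 1) * s = k * (k + 1)"
    by (simp add: algebra_simps power2_eq_square)
  show ?thesis using key_real0[where u="s+1" and v="m-1" and w="m-s+1" and x="k+1", OF nz br] .
qed

lemma alg:
  assumes s1: "1 \<le> s" and k1: "1 \<le> k" and kn: "k + 1 \<le> n - 1" and m: "m = n - k"
  shows "FF n k (s + 1) * (real (((m - (s + 1)) choose 0) * ((s + 1) choose 2)) / real (m choose 2))
       + FF n k s * (real (((m - s) choose 1) * (s choose 1)) / real (m choose 2))
       + FF n k (s - 1) * (real (((m - (s - 1)) choose 2) * ((s - 1) choose 0)) / real (m choose 2))
       = FF n (k + 1) s"
proof (cases "s \<le> k + 1 \<and> s \<le> m")
  case False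
  then consider "s > k + 1" | "s > m" by linarith
  then show ?thesis
  proof cases
    case 1
    then show ?thesis using s1 k1 by (simp add: FF_def binomial_eq_0)
  next
    case 2
    have "m - (s - 1) choose 2 = 0" using 2 by (simp add: binomial_eq_0)
    then show ?thesis using 2 s1 m by (simp add: FF_def binomial_eq_0)
  qed
next
  case True
  hence sk: "s \<le> k + 1" and sm: "s \<le> m" by auto
  have m2: "m \<ge> 2" using kn m by linarith
  define B where "B = real (k choose (s - 1))"
  define c1 where "c1 = real ((k - 1) choose (s - 1))"
  define c2 where "c2 = real ((k - 1) choose s)"
  define c3 where "c3 = (if s = 1 then 0 else real ((k - 1) choose (s - 2)))"
  define E where "E = real (m choose s)"
  define d1 where "d1 = real ((m - 1) choose s)"
  define d2 where "d2 = real (m choose (s + 1))"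
  define d3 where "d3 = real (m choose (s - 1))"
  define C0 where "C0 = real ((n - 1) choose k)"
  define C1 where "C1 = real ((n - 1) choose (k + 1))"
  have f1: "real k * c1 = (real k + 1 - real s) * B"
  proof -
    have "(k - (s - 1)) * (k choose (s - 1)) = k * ((k - 1) choose (s - 1))" by (rule binomial_absorb_comp)
    from arg_cong[OF this, of real] have "real (k - (s - 1)) * B = real k * c1" unfolding B_def c1_def by (simp only: of_nat_mult)
    moreover have "real (k - (s - 1)) = real k + 1 - real s" using sk s1 by linarith
    ultimately show ?thesis by (simp add: algebra_simps)
  qed
  have f2: "real s * c2 = (real k - real s) * c1"
  proof (cases "s \<le> k")
    case True
    have a: "Suc (s - 1) * ((k - 1) choose Suc (s - 1)) = (k - 1) * ((k - 1 - 1) choose (s - 1))"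
      by (rule binomial_absorption)
    have b: "(k - 1 - (s - 1)) * ((k - 1) choose (s - 1)) = (k - 1) * ((k - 1 - 1) choose (s - 1))"
      by (rule binomial_absorb_comp)
    have "s * ((k - 1) choose s) = (k - s) * ((k - 1) choose (s - 1))"
    proof -
      have "Suc (s - 1) = s" "k - 1 - (s - 1) = k - s" using s1 True by auto
      then show ?thesis using a b by simp
    qed
    from arg_cong[OF this, of real] have "real s * c2 = real (k - s) * c1" unfolding c1_def c2_def by (simp only: of_nat_mult)
    then show ?thesis using True by simp
  next
    case False
    then have "s = k + 1" using sk by simp
    then show ?thesis using k1 unfolding c1_def c2_def by (simp add: binomial_eq_0)
  qed
  have f3: "(real s - 1) * B = real k * c3"
  proof (cases "s = 1")
    case True then show ?thesis by (simp add: c3_def)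
  next
    case False
    have "Suc (s - 2) * (k choose Suc (s - 2)) = k * ((k - 1) choose (s - 2))" by (rule binomial_absorption)
    moreover have "Suc (s - 2) = s - 1" "s - 1 \<ge> 1" using False s1 by auto
    ultimately have "(s - 1) * (k choose (s - 1)) = k * ((k - 1) choose (s - 2))" by simp
    from arg_cong[OF this, of real] have "real (s - 1) * B = real k * c3" unfolding B_def c3_def using False by (simp only: of_nat_mult) (simp add: False)
    then show ?thesis using s1 by (simp add: of_nat_diff)
  qed
  have f4: "real m * d1 = (real m - real s) * E"
  proof -
    have "(m - s) * (m choose s) = m * ((m - 1) choose s)" by (rule binomial_absorb_comp)
    from arg_cong[OF this, of real] have "real (m - s) * E = real m * d1" unfolding E_def d1_def by (simp only: of_nat_mult)
    then show ?thesis using sm by (simp add: of_nat_diff)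
  qed
  have f5: "(real s + 1) * d2 = (real m - real s) * E"
  proof -
    have "Suc s * (m choose Suc s) = m * ((m - 1) choose s)" by (rule binomial_absorption)
    from arg_cong[OF this, of real] have "(real s + 1) * d2 = real m * d1" unfolding d2_def d1_def by (simp only: of_nat_mult of_nat_Suc add.commute Suc_eq_plus1 of_nat_add of_nat_1)
    then show ?thesis using f4 by simp
  qed
  have f6: "(real m - real s + 1) * d3 = real s * E"
  proof -
    have a: "(m - (s - 1)) * (m choose (s - 1)) = m * ((m - 1) choose (s - 1))" by (rule binomial_absorb_comp)
    have b: "Suc (s - 1) * (m choose Suc (s - 1)) = m * ((m - 1) choose (s - 1))" by (rule binomial_absorption)
    have "(m - (s - 1)) * (m choose (s - 1)) = s * (m choose s)" using a b s1 by simp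
    from arg_cong[OF this, of real] have "real (m - (s - 1)) * d3 = real s * E" unfolding d3_def E_def by (simp only: of_nat_mult)
    moreover have "real (m - (s - 1)) = real m - real s + 1" using sm s1 by linarith
    ultimately show ?thesis by (simp add: algebra_simps)
  qed
  have f7: "(real k + 1) * C1 = (real m - 1) * C0"
  proof -
    have a: "Suc k * ((n - 1) choose Suc k) = (n - 1) * ((n - 1 - 1) choose k)" by (rule binomial_absorption)
    have b: "(n - 1 - k) * ((n - 1) choose k) = (n - 1) * ((n - 1 - 1) choose k)" by (rule binomial_absorb_comp)
    have "Suc k * ((n - 1) choose Suc k) = (m - 1) * ((n - 1) choose k)" using a b m by simp
    from arg_cong[OF this, of real] have "real (Suc k) * C1 = real (m - 1) * C0" unfolding C1_def C0_def by (simp only: of_nat_mult Suc_eq_plus1)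
    then show ?thesis using m2 by (simp add: of_nat_diff add.commute)
  qed
  have C0pos: "C0 > 0" unfolding C0_def using kn by simp
  have mr: "real m \<ge> 2" using m2 by simp
  have kr: "real k \<ge> 1" using k1 by simp
  have sr: "real s \<ge> 1" using s1 by simp
  have ms: "real (m - s) = real m - real s" using sm by (simp add: of_nat_diff)
  have ms1: "real (m - (s - 1)) = real m - real s + 1" using sm s1 by linarith
  have e1: "c1 = (real k + 1 - real s) * B / real k" using f1 kr by (simp add: field_simps)
  have e2: "c2 = (real k - real s) * c1 / real s" using f2 sr by (simp add: field_simps)
  have e3: "c3 = (real s - 1) * B / real k" using f3 kr by (simp add: field_simps)
  have e4: "d1 = (real m - real s) * E / real m" using f4 mr by (simp add: field_simps)
  have e5: "d2 = (real m - real s) * E / (real s + 1)" using f5 sr by (simp add: field_simps)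
  have e6: "d3 = real s * E / (real m - real s + 1)" using f6 sm by (simp add: field_simps)
  have e7: "C1 = (real m - 1) * C0 / (real k + 1)" using f7 by (simp add: field_simps)
  have nk1: "n - (k + 1) = m - 1" "k + 1 - 1 = k" "n - k = m" using m by auto
  have L: "FF n (k + 1) s = B * d1 / C1"
    using s1 unfolding FF_def B_def d1_def C1_def nk1 by simp
  have R1: "FF n k (s + 1) = c2 * d2 / C0" unfolding FF_def c2_def d2_def C0_def nk1 by simp
  have R2: "FF n k s = c1 * E / C0" unfolding FF_def c1_def E_def C0_def nk1 using s1 by simp
  have R3: "FF n k (s - 1) = c3 * d3 / C0"
  proof (cases "s = 1")
    case True then show ?thesis unfolding FF_def c3_def by simp
  next
    case False
    then have "s - 1 \<noteq> 0" "s - 1 - 1 = s - 2" using s1 by auto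
    then show ?thesis unfolding FF_def c3_def d3_def C0_def nk1 using False by simp
  qed
  have t1: "real (((m - (s + 1)) choose 0) * ((s + 1) choose 2)) = (real s + 1) * real s / 2"
    unfolding binomial_n_0 mult_1 choose2_real by (simp add: algebra_simps)
  have t2: "real (((m - s) choose 1) * (s choose 1)) = (real m - real s) * real s"
    using ms by simp
  have t3: "real (((m - (s - 1)) choose 2) * ((s - 1) choose 0)) = (real m - real s + 1) * (real m - real s) / 2"
    unfolding binomial_n_0 mult_1_right choose2_real ms1 by (simp add: algebra_simps)
  have t4: "real (m choose 2) = real m * (real m - 1) / 2" by (rule choose2_real)
  show ?thesis
  proof -
    have nz: "real m - real s + 1 \<noteq> 0" "real m - 1 \<noteq> 0" "real s + 1 \<noteq> 0" "real k + 1 \<noteq> 0"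
      "real k \<noteq> 0" "real s \<noteq> 0" "real m \<noteq> 0" "C0 \<noteq> 0" "real m * (real m - 1) / 2 \<noteq> 0"
      using mr kr sr C0pos sm by auto
    show ?thesis unfolding L R1 R2 R3 t1 t2 t3 t4 e7 e6 e5 e4 e3 e2 e1 using key_real[OF nz(5,6,7,2,3,4,1,8)] by (simp add: mult.assoc)
  qed
qed


lemma pairs_facts:
  assumes "m \<ge> 2"
  shows "finite (urn_pairs m)" "urn_pairs m \<noteq> {}" "card (urn_pairs m) = m choose 2"
proof -
  show c: "card (urn_pairs m) = m choose 2" unfolding urn_pairs_def using n_subsets[of "{0..<m}" 2] by simp
  show "finite (urn_pairs m)" unfolding urn_pairs_def by (rule finite_subset[of _ "Pow {0..<m}"]) auto
  have "m choose 2 > 0" using assms by (simp add: zero_less_binomial)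
  then show "urn_pairs m \<noteq> {}" using c by auto
qed

lemma support:
  "k \<le> n \<Longrightarrow> x \<in> set_pmf (urn_state n k) \<Longrightarrow> fst x + snd x = n - k"
proof (induction k arbitrary: x)
  case 0
  then show ?case by simp
next
  case (Suc k)
  then obtain y where y: "y \<in> set_pmf (urn_state n k)" and x: "x \<in> set_pmf (urn_step y)" by auto
  obtain b r where br: "y = (b, r)" by (cases y)
  have IH: "b + r = n - k" using Suc.IH[of y] Suc.prems y br by simp
  show ?case
  proof (cases "b + r \<ge> 2")
    case True
    note pf = pairs_facts[OF True]
    have "set_pmf (urn_step (b, r)) = (\<lambda>S. (b - card (S \<inter> {..<b}), r - card (S - {..<b}) + 1)) ` urn_pairs (b + r)"
      using True pf by (simp add: urn_step_def)
    then obtain S where S: "S \<in> urn_pairs (b + r)" and xS: "x = (b - card (S \<inter> {..<b}), r - card (S - {..<b}) + 1)"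
      using x br by auto
    have fS: "finite S" "card S = 2" "S \<subseteq> {0..<b+r}" using S unfolding urn_pairs_def by (auto intro: finite_subset)
    have c12: "card (S \<inter> {..<b}) + card (S - {..<b}) = 2" using card_diff_lt[of S "{..<b}"] fS by simp
    have c1: "card (S \<inter> {..<b}) \<le> b" using card_mono[of "{..<b}" "S \<inter> {..<b}"] by auto
    have "S - {..<b} \<subseteq> {b..<b+r}" using fS by auto
    then have c2: "card (S - {..<b}) \<le> r" using card_mono[of "{b..<b+r}" "S - {..<b}"] by auto
    show ?thesis using xS c12 c1 c2 IH by simp
  next
    case False
    then have "x = (0, 0)" using x br by (simp add: urn_step_def)
    then show ?thesis using IH Suc.prems False by simp
  qed
qed

lemma state_eq:
  assumes "k \<le> n"
  shows "urn_state n k = map_pmf (\<lambda>r. (n - k - r, r)) (urn_U n k)"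
proof -
  have "map_pmf (\<lambda>r. (n - k - r, r)) (urn_U n k) = map_pmf (\<lambda>x. (n - k - snd x, snd x)) (urn_state n k)"
    unfolding urn_U_def by (simp add: map_pmf_comp)
  also have "\<dots> = urn_state n k"
  proof (rule map_pmf_idI)
    fix x assume "x \<in> set_pmf (urn_state n k)"
    then have "fst x + snd x = n - k" using support assms by blast
    then show "(n - k - snd x, snd x) = x" by (cases x) auto
  qed
  finally show ?thesis by simp
qed

lemma U_le: "k \<le> n \<Longrightarrow> r \<in> set_pmf (urn_U n k) \<Longrightarrow> r \<le> n - k"
  unfolding urn_U_def using support by fastforce

lemma U_rec:
  assumes "Suc k \<le> n - 1"
  shows "pmf (urn_U n (Suc k)) s =
    (\<Sum>r\<le>n - k. pmf (urn_U n k) r * pmf (map_pmf snd (urn_step (n - k - r, r))) s)"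
proof -
  have kn: "k \<le> n" using assms by simp
  have "urn_U n (Suc k) = bind_pmf (urn_U n k) (\<lambda>r. map_pmf snd (urn_step (n - k - r, r)))"
    unfolding urn_U_def urn_state.simps map_bind_pmf
    by (subst state_eq[OF kn]) (simp add: bind_map_pmf urn_U_def)
  then have "pmf (urn_U n (Suc k)) s = (\<integral>r. pmf (map_pmf snd (urn_step (n - k - r, r))) s \<partial>measure_pmf (urn_U n k))"
    by (simp add: pmf_bind)
  also have "\<dots> = (\<Sum>r\<le>n - k. pmf (map_pmf snd (urn_step (n - k - r, r))) s * pmf (urn_U n k) r)"
    by (rule integral_measure_pmf_real) (auto dest: U_le[OF kn])
  finally show ?thesis by (simp add: mult.commute)
qed

lemma sum_collapse:
  fixes g :: "nat \<Rightarrow> real"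
  assumes s1: "s \<ge> 1" and gz: "\<And>r. r > m \<Longrightarrow> g r = 0"
  shows "(\<Sum>r\<le>m. g r * (\<Sum>t\<le>2. if r - (2 - t) + 1 = s
            then real ((m - r choose t) * (r choose (2 - t))) / real (m choose 2) else 0))
       = g (s + 1) * (real (((m - (s + 1)) choose 0) * ((s + 1) choose 2)) / real (m choose 2))
       + g s * (real (((m - s) choose 1) * (s choose 1)) / real (m choose 2))
       + g (s - 1) * (real (((m - (s - 1)) choose 2) * ((s - 1) choose 0)) / real (m choose 2))"
proof -
  define W where "W = (\<lambda>r t. real ((m - r choose t) * (r choose (2 - t))) / real (m choose 2))"
  have trm: "g r * (if r - (2 - t) + 1 = s then W r t else 0) = (if r = s + 1 - t then g r * W r t else 0)"
    if "t \<le> 2" for r t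
  proof (cases "r \<ge> 2 - t")
    case True
    then have "(r - (2 - t) + 1 = s) = (r = s + 1 - t)" using that s1 by auto
    then show ?thesis by simp
  next
    case False
    then have w0: "W r t = 0" unfolding W_def by simp
    show ?thesis by (simp only: w0 mult_zero_right if_cancel)
  qed
  have "(\<Sum>r\<le>m. g r * (\<Sum>t\<le>2. if r - (2 - t) + 1 = s then W r t else 0))
      = (\<Sum>r\<le>m. \<Sum>t\<le>2. g r * (if r - (2 - t) + 1 = s then W r t else 0))"
    by (simp add: sum_distrib_left)
  also have "\<dots> = (\<Sum>r\<le>m. \<Sum>t\<le>2. (if r = s + 1 - t then g r * W r t else 0))"
    using trm by (intro sum.cong) auto
  also have "\<dots> = (\<Sum>t\<le>2. \<Sum>r\<le>m. (if r = s + 1 - t then g r * W r t else 0))"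
    by (rule sum.swap)
  also have "\<dots> = (\<Sum>t\<le>2. g (s + 1 - t) * W (s + 1 - t) t)"
  proof (intro sum.cong refl)
    fix t
    show "(\<Sum>r\<le>m. (if r = s + 1 - t then g r * W r t else 0)) = g (s + 1 - t) * W (s + 1 - t) t"
      using gz[of "s + 1 - t"] by (simp add: sum.delta' not_le)
  qed
  also have "\<dots> = g (s + 1) * W (s + 1) 0 + g s * W s 1 + g (s - 1) * W (s - 1) 2"
    by (simp add: numeral_2_eq_2)
  finally show ?thesis unfolding W_def by (simp add: numeral_2_eq_2)
qed

lemma U_base:
  assumes n2: "n \<ge> 2"
  shows "pmf (urn_U n 1) s = FF n 1 s"
proof -
  have "urn_U n 1 = map_pmf snd (urn_step (n, 0))"
    unfolding urn_U_def by (simp add: bind_return_pmf)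
  then have "pmf (urn_U n 1) s = (\<Sum>t\<le>2. if 0 - (2 - t) + 1 = s then real ((n choose t) * (0 choose (2 - t))) / real (n choose 2) else 0)"
    using step_red[of n 0 n s] n2 by simp
  also have "\<dots> = (if s = 1 then 1 else 0)"
    using n2 by (simp add: numeral_2_eq_2 zero_less_binomial)
  also have "\<dots> = FF n 1 s"
    unfolding FF_def using n2 by (cases "s = 1") (auto simp: binomial_eq_0)
  finally show ?thesis .
qed

lemma U_formula:
  assumes n2: "n \<ge> 2"
  shows "1 \<le> k \<Longrightarrow> k \<le> n - 1 \<Longrightarrow> pmf (urn_U n k) s = FF n k s"
proof (induction k arbitrary: s)
  case 0
  then show ?case by simp
next
  case (Suc k)
  show ?case
  proof (cases "k = 0")
    case True
    then show ?thesis using U_base[OF n2] by simp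
  next
    case False
    then have k1: "1 \<le> k" by simp
    define m where "m = n - k"
    have m2: "m \<ge> 2" using Suc.prems unfolding m_def by simp
    have IH: "pmf (urn_U n k) r = FF n k r" for r using Suc.IH k1 Suc.prems by simp
    have rec: "pmf (urn_U n (Suc k)) s = (\<Sum>r\<le>m. FF n k r * (\<Sum>t\<le>2. if r - (2 - t) + 1 = s
            then real ((m - r choose t) * (r choose (2 - t))) / real (m choose 2) else 0))"
      unfolding U_rec[OF Suc.prems(2)] m_def[symmetric] IH
    proof (intro sum.cong refl)
      fix r assume "r \<in> {..m}"
      then have "(m - r) + r = m" by simp
      then show "FF n k r * pmf (map_pmf snd (urn_step (m - r, r))) s = FF n k r * (\<Sum>t\<le>2. if r - (2 - t) + 1 = s
            then real ((m - r choose t) * (r choose (2 - t))) / real (m choose 2) else 0)"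
        using step_red[of "m - r" r m s] m2 by simp
    qed
    show ?thesis
    proof (cases "s = 0")
      case True
      then show ?thesis unfolding rec by (simp add: FF_def)
    next
      case False
      have gz: "FF n k r = 0" if "r > m" for r using that unfolding FF_def m_def by (simp add: binomial_eq_0)
      have s1: "1 \<le> s" using False by simp
      have kn: "k + 1 \<le> n - 1" using Suc.prems by simp
      show ?thesis
        apply (subst rec)
        apply (subst sum_collapse[OF s1, where m=m and g="FF n k"])
         apply (erule gz)
        using alg[OF s1 k1 kn m_def] by simp
    qed
  qed
qed


theorem mainTheorem9:
  fixes n k :: nat
  assumes "n \<ge> 2" and "1 \<le> k" and "k \<le> n - 1"
  shows "\<forall>j::int. measure_pmf.prob (urn_U n k) {u. int u - 1 = j} =
           (if 0 \<le> j \<and> j \<le> int (n - k - 1) then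
              real ((k - 1) choose nat j) * real ((n - k) choose (n - k - 1 - nat j))
                / real ((n - 1) choose (n - k - 1))
            else 0)"
proof
  fix j :: int
  have U: "pmf (urn_U n k) s = FF n k s" for s using U_formula[OF assms(1) assms(2,3)] .
  have sym2: "(n - 1) choose (n - k - 1) = (n - 1) choose k"
    using binomial_symmetric[of k "n - 1"] assms by (simp add: diff_diff_add add.commute)
  show "measure_pmf.prob (urn_U n k) {u. int u - 1 = j} =
           (if 0 \<le> j \<and> j \<le> int (n - k - 1) then
              real ((k - 1) choose nat j) * real ((n - k) choose (n - k - 1 - nat j))
                / real ((n - 1) choose (n - k - 1))
            else 0)"
  proof (cases "j \<ge> 0")
    case True
    have set: "{u. int u - 1 = j} = {nat j + 1}" using True by auto
    have P: "measure_pmf.prob (urn_U n k) {u. int u - 1 = j}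
        = real ((k - 1) choose nat j) * real ((n - k) choose (nat j + 1)) / real ((n - 1) choose k)"
      unfolding set measure_pmf_single U FF_def by simp
    show ?thesis
    proof (cases "j \<le> int (n - k - 1)")
      case True
      have "nat j \<le> n - k - 1" using True by (simp add: nat_le_iff)
      then have "nat j + 1 \<le> n - k" using assms by linarith
      then have "(n - k) choose (nat j + 1) = (n - k) choose (n - k - 1 - nat j)"
        using binomial_symmetric[of "nat j + 1" "n - k"] by simp
      then show ?thesis using P True \<open>j \<ge> 0\<close> sym2 by simp
    next
      case False
      then have "(n - k) choose (nat j + 1) = 0" by (simp add: binomial_eq_0_iff)
      then show ?thesis using P False by simp
    qed
  next
    case False
    show ?thesis
    proof (cases "j = -1")
      case True
      then have "{u. int u - 1 = j} = {0}" by auto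
      then show ?thesis using False True by (simp add: measure_pmf_single U FF_def)
    next
      case F2: False
      then have "{u. int u - 1 = j} = {}" using False by auto
      then show ?thesis using False by simp
    qed
  qed
qed

end
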